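(* Let $\kappa$ be a Mahlo cardinal, or more generally a strongly inaccessible cardinal such that $S^\kappa_{\mathrm{pr}}$ is stationary in $\kappa$. Then $\mathfrak b_\kappa\le\mathrm{cf}(\mathbf{nst}^{\mathrm{pr}}_\kappa)$.
   Context: For a cardinal $\lambda$, $S^\lambda_{\mathrm{inc}}$ is the set of strongly inaccessible cardinals below $\lambda$. A set $S\subseteq\lambda$ is nowhere stationary if for every $\delta\le\lambda$ of uncountable cofinality, $S\cap\delta$ is nonstationary in $\delta$. By induction on strongly inaccessible $\lambda$ one defines a forcing $\mathbb Q_\lambda$ and an ideal $\mathrm{id}(\mathbb Q_\lambda)$ on $2^\lambda$: $p\in\mathbb Q_\lambda$ iff $p\subseteq 2^{<\lambda}$ is closed under initial segments and there is a witness $(\tau,S,\langle N_\delta:\delta\in S\rangle)$ with: (i) $\tau$ is the trunk of $p$, the least node of $p$ having two immediate successors in $p$; (ii) if $\tau\trianglelefteq\eta\in p$ then $\eta^\frown0,\eta^\frown1\in p$; (iii) $S\subseteq S^\lambda_{\mathrm{inc}}$ is nowhere stationary; (iv) $N_\delta\in\mathrm{id}(\mathbb Q_\delta)$ for $\delta\in S$; (v) for limit $\delta<\lambda$ with $\delta\notin S$ and $\eta\in2^\delta$: $\eta\in p$ iff $\eta\restriction\sigma\in p$ for all $\sigma<\delta$; (vi) for $\delta\in S$ and $\eta\in 2^\delta$: $\eta\in p$ iff $\eta\restriction\sigma\in p$ for all $\sigma<\delta$ and $\eta\notin N_\delta$. The order is $q\le p$ iff $q\subseteq p$. $[p]$ is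 the set of $x\in 2^\lambda$ all of whose proper initial segments lie in $p$; for $\mathcal J\subseteq\mathbb Q_\lambda$, $\mathrm{set}_0(\mathcal J)=2^\lambda\setminus\bigcup_{p\in\mathcal J}[p]$. $A\in\mathrm{id}(\mathbb Q_\lambda)$ iff there are at most $\lambda$ predense sets $\mathcal J_i\subseteq\mathbb Q_\lambda$ with $A\subseteq\bigcup_i\mathrm{set}_0(\mathcal J_i)$. $\Pr(\lambda)$ means: there is a family $\{\Lambda_i:i<\lambda\}$ of maximal antichains of $\mathbb Q_\lambda$ such that no $p\in\mathbb Q_\lambda$ satisfies $[p]\subseteq\bigcap_{i<\lambda}\bigcup_{q\in\Lambda_i}[q]$; $S^\kappa_{\mathrm{pr}}=\{\lambda\in S^\kappa_{\mathrm{inc}}:\Pr(\lambda)\}$. $\mathbf{nst}^{\mathrm{pr}}_\kappa$ is the family of nowhere stationary subsets of $S^\kappa_{\mathrm{pr}}$, ordered by $\subseteq^*$ (inclusion modulo a bounded subset of $\kappa$); $\mathrm{cf}(\mathbf{nst}^{\mathrm{pr}}_\kappa)$ is the least size of a subfamily $\mathcal C$ such that every member of $\mathbf{nst}^{\mathrm{pr}}_\kappa$ is $\subseteq^*$ some member of $\mathcal C$. $\mathfrak b_\kappa$ is the least size of a family $B\subseteq\kappa^\kappa$ with no $\le^*$-upper bound in $\kappa^\kappa$, where $f\le^*g$ means $f(i)\le g(i)$ for all but boundedly many $i<\kappa$. *)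

theory Defs
  imports Main "HOL-Library.Countable_Set" "HOL-Library.FuncSet"
begin

(* Ordinals are elements of a well-ordered type 'a; the ordinal d is identified
   with the set below d of its predecessors. *)

type_synonym 'a node = "'a \<times> ('a \<Rightarrow> bool)"

definition below :: "'a::wellorder \<Rightarrow> 'a set" where
  "below d = {x. x < d}"

definition is_limit :: "'a::wellorder \<Rightarrow> bool" where
  "is_limit d \<longleftrightarrow> (\<exists>x. x < d) \<and> (\<forall>b<d. \<exists>x. b < x \<and> x < d)"

definition cofinal_in :: "'a::wellorder set \<Rightarrow> 'a \<Rightarrow> bool" where
  "cofinal_in C d \<longleftrightarrow> C \<subseteq> below d \<and> (\<forall>b<d. \<exists>c\<in>C. b \<le> c)"

definition uncountable_cf :: "'a::wellorder \<Rightarrow> bool" where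
  "uncountable_cf d \<longleftrightarrow> \<not> (\<exists>C. cofinal_in C d \<and> countable C)"

definition club :: "'a::wellorder set \<Rightarrow> 'a \<Rightarrow> bool" where
  "club C d \<longleftrightarrow> C \<subseteq> below d \<and> (\<forall>b<d. \<exists>c\<in>C. b \<le> c) \<and>
     (\<forall>g<d. is_limit g \<and> (\<forall>b<g. \<exists>c\<in>C. b < c \<and> c < g) \<longrightarrow> g \<in> C)"

definition stationary_in :: "'a::wellorder set \<Rightarrow> 'a \<Rightarrow> bool" where
  "stationary_in S d \<longleftrightarrow> (\<forall>C. club C d \<longrightarrow> S \<inter> C \<noteq> {})"

definition nowhere_stationary :: "'a::wellorder \<Rightarrow> 'a set \<Rightarrow> bool" where
  "nowhere_stationary l S \<longleftrightarrow>
     (\<forall>d. d \<le> l \<and> uncountable_cf d \<longrightarrow> \<not> stationary_in (S \<inter> below d) d)"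

definition is_cardinal :: "'a::wellorder \<Rightarrow> bool" where
  "is_cardinal l \<longleftrightarrow> (\<forall>m<l. (card_of (below m), card_of (below l)) \<in> ordLess)"

definition regular :: "'a::wellorder \<Rightarrow> bool" where
  "regular l \<longleftrightarrow> (\<forall>C. cofinal_in C l \<longrightarrow> (card_of C, card_of (below l)) \<in> ordIso)"

definition strong_limit :: "'a::wellorder \<Rightarrow> bool" where
  "strong_limit l \<longleftrightarrow> (\<forall>m<l. (card_of (Pow (below m)), card_of (below l)) \<in> ordLess)"

definition strongly_inaccessible :: "'a::wellorder \<Rightarrow> bool" where
  "strongly_inaccessible l \<longleftrightarrow>
     \<not> countable (below l) \<and> is_cardinal l \<and> regular l \<and> strong_limit l"

definition S_inc :: "'a::wellorder \<Rightarrow> 'a set" where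
  "S_inc l = {x. x < l \<and> strongly_inaccessible x}"

(* 2^d : a node (d, f) with f vanishing from d on *)
definition seqs :: "'a::wellorder \<Rightarrow> 'a node set" where
  "seqs d = {(d, f) | f. \<forall>x. d \<le> x \<longrightarrow> \<not> f x}"

definition tree_lt :: "'a::wellorder \<Rightarrow> 'a node set" where
  "tree_lt l = (\<Union>d\<in>below l. seqs d)"

definition restr :: "'a::wellorder node \<Rightarrow> 'a \<Rightarrow> 'a node" where
  "restr eta s = (s, \<lambda>x. x < s \<and> snd eta x)"

definition init_seg :: "'a::wellorder node \<Rightarrow> 'a node \<Rightarrow> bool" where
  "init_seg nu eta \<longleftrightarrow> fst nu \<le> fst eta \<and> nu = restr eta (fst nu)"

definition succ_ord :: "'a::wellorder \<Rightarrow> 'a" where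
  "succ_ord d = (LEAST x. d < x)"

definition extend :: "'a::wellorder node \<Rightarrow> bool \<Rightarrow> 'a node" where
  "extend eta b = (succ_ord (fst eta), (snd eta)(fst eta := b))"

definition is_trunk :: "'a::wellorder node set \<Rightarrow> 'a node \<Rightarrow> bool" where
  "is_trunk p tau \<longleftrightarrow> tau \<in> p \<and> extend tau False \<in> p \<and> extend tau True \<in> p \<and>
     (\<forall>nu\<in>p. extend nu False \<in> p \<and> extend nu True \<in> p \<longrightarrow> init_seg tau nu)"

(* Q_l, given the ideals Id d = id(Q_d) for d < l *)
definition Qset :: "('a::wellorder \<Rightarrow> 'a node set set) \<Rightarrow> 'a \<Rightarrow> 'a node set set" where
  "Qset Idl l = {p. p \<subseteq> tree_lt l \<and> (\<forall>eta\<in>p. \<forall>nu. init_seg nu eta \<longrightarrow> nu \<in> p) \<and>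
     (\<exists>tau S N.
        is_trunk p tau \<and>
        (\<forall>eta\<in>p. init_seg tau eta \<longrightarrow> extend eta False \<in> p \<and> extend eta True \<in> p) \<and>
        S \<subseteq> S_inc l \<and> nowhere_stationary l S \<and>
        (\<forall>d\<in>S. N d \<in> Idl d) \<and>
        (\<forall>d. d < l \<and> is_limit d \<and> d \<notin> S \<longrightarrow>
            (\<forall>eta\<in>seqs d. eta \<in> p \<longleftrightarrow> (\<forall>s<d. restr eta s \<in> p))) \<and>
        (\<forall>d\<in>S. \<forall>eta\<in>seqs d. eta \<in> p \<longleftrightarrow> (\<forall>s<d. restr eta s \<in> p) \<and> eta \<notin> N d))}"

definition branches :: "'a::wellorder \<Rightarrow> 'a node set \<Rightarrow> 'a node set" where
  "branches l p = {x \<in> seqs l. \<forall>s<l. restr x s \<in> p}"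

definition compatible :: "'b set set \<Rightarrow> 'b set \<Rightarrow> 'b set \<Rightarrow> bool" where
  "compatible Q p q \<longleftrightarrow> (\<exists>r\<in>Q. r \<subseteq> p \<and> r \<subseteq> q)"

definition predense :: "'b set set \<Rightarrow> 'b set set \<Rightarrow> bool" where
  "predense Q J \<longleftrightarrow> J \<subseteq> Q \<and> (\<forall>p\<in>Q. \<exists>q\<in>J. compatible Q p q)"

definition max_antichain :: "'b set set \<Rightarrow> 'b set set \<Rightarrow> bool" where
  "max_antichain Q A \<longleftrightarrow> predense Q A \<and> (\<forall>p\<in>A. \<forall>q\<in>A. p \<noteq> q \<longrightarrow> \<not> compatible Q p q)"

definition set0 :: "'a::wellorder \<Rightarrow> 'a node set set \<Rightarrow> 'a node set" where
  "set0 l J = seqs l - (\<Union>q\<in>J. branches l q)"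

definition idset :: "'a::wellorder node set set \<Rightarrow> 'a \<Rightarrow> 'a node set set" where
  "idset Q l = {A. A \<subseteq> seqs l \<and>
     (\<exists>JJ. (card_of JJ, card_of (below l)) \<in> ordLeq \<and> (\<forall>J\<in>JJ. predense Q J) \<and>
           A \<subseteq> (\<Union>J\<in>JJ. set0 l J))}"

definition idQ :: "'a::wellorder \<Rightarrow> 'a node set set" where
  "idQ = wfrec {(x, y). x < y} (\<lambda>H l. idset (Qset H l) l)"

definition QQ :: "'a::wellorder \<Rightarrow> 'a node set set" where
  "QQ l = Qset idQ l"

definition Pr :: "'a::wellorder \<Rightarrow> bool" where
  "Pr l \<longleftrightarrow> (\<exists>Lam. (\<forall>i<l. max_antichain (QQ l) (Lam i)) \<and>
     \<not> (\<exists>p\<in>QQ l. branches l p \<subseteq> (\<Inter>i\<in>below l. \<Union>q\<in>Lam i. branches l q)))"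

definition S_pr :: "'a::wellorder \<Rightarrow> 'a set" where
  "S_pr k = {l \<in> S_inc k. Pr l}"

definition subseteq_star :: "'a::wellorder \<Rightarrow> 'a set \<Rightarrow> 'a set \<Rightarrow> bool" where
  "subseteq_star k A B \<longleftrightarrow> (\<exists>b<k. A - B \<subseteq> below b)"

definition nst_pr :: "'a::wellorder \<Rightarrow> 'a set set" where
  "nst_pr k = {S. S \<subseteq> S_pr k \<and> nowhere_stationary k S}"

definition cofinal_family :: "'a::wellorder \<Rightarrow> 'a set set \<Rightarrow> bool" where
  "cofinal_family k C \<longleftrightarrow> C \<subseteq> nst_pr k \<and> (\<forall>S\<in>nst_pr k. \<exists>T\<in>C. subseteq_star k S T)"

definition kfuns :: "'a::wellorder \<Rightarrow> ('a \<Rightarrow> 'a) set" where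
  "kfuns k = below k \<rightarrow>\<^sub>E below k"

definition le_star :: "'a::wellorder \<Rightarrow> ('a \<Rightarrow> 'a) \<Rightarrow> ('a \<Rightarrow> 'a) \<Rightarrow> bool" where
  "le_star k f g \<longleftrightarrow> (\<exists>b<k. \<forall>i. b \<le> i \<and> i < k \<longrightarrow> f i \<le> g i)"

definition unbounded_family :: "'a::wellorder \<Rightarrow> ('a \<Rightarrow> 'a) set \<Rightarrow> bool" where
  "unbounded_family k B \<longleftrightarrow> B \<subseteq> kfuns k \<and> \<not> (\<exists>g\<in>kfuns k. \<forall>f\<in>B. le_star k f g)"

end

theory Submission
  imports Defs
begin

lemma ucf_of_reg:
  fixes l :: "'a::wellorder"
  assumes "\<not> countable (below l)" "regular l"
  shows "uncountable_cf l"
proof -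
  { fix C assume c: "cofinal_in C l" "countable C"
    then have "(card_of C, card_of (below l)) \<in> ordIso" using assms(2) unfolding regular_def by blast
    then obtain f where "bij_betw f C (below l)" using card_of_ordIso by blast
    then have "below l = f ` C" by (simp add: bij_betw_def)
    then have "countable (below l)" using c(2) by simp
    with assms(1) have False by simp }
  then show ?thesis unfolding uncountable_cf_def by blast
qed

lemma ucf_lim:
  fixes d :: "'a::wellorder"
  assumes "uncountable_cf d" "b < d"
  shows "\<exists>x. b < x \<and> x < d"
proof (rule ccontr)
  assume "\<not> ?thesis"
  then have "cofinal_in {b} d" using assms(2) unfolding cofinal_in_def below_def
    by (auto simp: not_less)
  then show False using assms(1) unfolding uncountable_cf_def by blast
qed

lemma omega_sup:
  fixes d :: "'a::wellorder"
  assumes "uncountable_cf d" "\<forall>b<d. b < F b \<and> F b < d" "c < d"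
  shows "\<exists>\<gamma><d. c < \<gamma> \<and> (\<forall>b<\<gamma>. \<exists>n. b < (F^^n) c) \<and> (\<forall>n. (F^^n) c < \<gamma>)"
proof -
  define s where "s n = (F^^n) c" for n
  have sd: "s n < d" for n by (induction n) (use assms in \<open>auto simp: s_def\<close>)
  have ss: "s n < s (Suc n)" for n using sd[of n] assms(2) by (simp add: s_def)
  have "\<not> cofinal_in (range s) d" using assms(1) unfolding uncountable_cf_def by blast
  moreover have "range s \<subseteq> below d" using sd by (auto simp: below_def)
  ultimately obtain b where b: "b < d" "\<forall>n. s n < b"
    unfolding cofinal_in_def by (auto simp: not_le)
  define \<gamma> where "\<gamma> = (LEAST y. \<forall>n. s n < y)"
  have g1: "\<forall>n. s n < \<gamma>" unfolding \<gamma>_def by (rule LeastI[of _ b]) (use b in auto)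
  have g2: "\<gamma> \<le> b" unfolding \<gamma>_def by (rule Least_le) (use b in auto)
  have g3: "\<exists>n. x < s n" if "x < \<gamma>" for x
  proof (rule ccontr)
    assume "\<not> ?thesis"
    then have "\<forall>n. s n < x" using ss by (meson leD leI order.strict_trans1)
    then have "\<gamma> \<le> x" unfolding \<gamma>_def by (rule Least_le)
    then show False using that by simp
  qed
  have "c < \<gamma>" using g1[rule_format, of 0] by (simp add: s_def)
  then show ?thesis using g1 g2 g3 b(1) unfolding s_def by (meson order.strict_trans1)
qed

lemma nolimit_ns:
  fixes S :: "'a::wellorder set"
  assumes A: "\<forall>a\<in>S. \<exists>e<a. \<forall>x\<in>S. x < a \<longrightarrow> x \<le> e"
  shows "nowhere_stationary l S"
  unfolding nowhere_stationary_def
proof (intro allI impI)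
  fix \<delta> :: 'a assume "\<delta> \<le> l \<and> uncountable_cf \<delta>"
  then have u: "uncountable_cf \<delta>" by simp
  have "\<exists>C. club C \<delta> \<and> (S \<inter> below \<delta>) \<inter> C = {}"
  proof (cases "\<exists>b<\<delta>. \<forall>x\<in>S. x < \<delta> \<longrightarrow> x \<le> b")
    case True
    then obtain b where b: "b < \<delta>" "\<forall>x\<in>S. x < \<delta> \<longrightarrow> x \<le> b" by blast
    obtain x where x: "b < x" "x < \<delta>" using ucf_lim[OF u b(1)] by blast
    define C where "C = {\<gamma>. b < \<gamma> \<and> \<gamma> < \<delta>}"
    have "club C \<delta>" unfolding club_def
    proof (intro conjI allI impI)
      show "C \<subseteq> below \<delta>" by (auto simp: C_def below_def)
    next
      fix c assume "c < \<delta>"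
      then show "\<exists>y\<in>C. c \<le> y" using x unfolding C_def
        by (intro bexI[of _ "max c x"]) (auto simp: max_def)
    next
      fix g assume g0: "g < \<delta>" and g: "is_limit g \<and> (\<forall>b<g. \<exists>c\<in>C. b < c \<and> c < g)"
      then obtain y where "y < g" unfolding is_limit_def by blast
      then obtain c where "c \<in> C" "c < g" using g by blast
      then show "g \<in> C" using g g0 by (auto simp: C_def)
    qed
    moreover have "(S \<inter> below \<delta>) \<inter> C = {}" using b(2) by (auto simp: C_def below_def)
    ultimately show ?thesis by blast
  next
    case False
    then have F: "\<forall>b<\<delta>. \<exists>x\<in>S. x < \<delta> \<and> b < x" by (auto simp: not_le)
    define F where "F b = (SOME x. x \<in> S \<and> x < \<delta> \<and> b < x)" for b
    have Fp: "F b \<in> S \<and> F b < \<delta> \<and> b < F b" if "b < \<delta>" for b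
      unfolding F_def by (rule someI_ex) (use F that in blast)
    define C where "C = {\<gamma>. \<gamma> < \<delta> \<and> is_limit \<gamma> \<and> (\<forall>b<\<gamma>. \<exists>c\<in>S. b < c \<and> c < \<gamma>)}"
    have "club C \<delta>" unfolding club_def
    proof (intro conjI allI impI)
      show "C \<subseteq> below \<delta>" by (auto simp: C_def below_def)
    next
      fix c assume c: "c < \<delta>"
      obtain \<gamma> where g: "\<gamma> < \<delta>" "c < \<gamma>" "\<forall>b<\<gamma>. \<exists>n. b < (F^^n) c" "\<forall>n. (F^^n) c < \<gamma>"
        using omega_sup[OF u _ c, of F] Fp by blast
      have sd: "(F^^n) c < \<delta>" for n using g(1,4) by (meson order.strict_trans)
      have "\<gamma> \<in> C" unfolding C_def is_limit_def
      proof (intro CollectI conjI allI impI)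
        fix b assume "b < \<gamma>"
        then obtain n where n: "b < (F^^n) c" using g by blast
        have "(F^^(Suc n)) c \<in> S" "(F^^n) c < (F^^(Suc n)) c" using Fp[OF sd[of n]] by auto
        then show "\<exists>c'\<in>S. b < c' \<and> c' < \<gamma>" using n g(4)[rule_format, of "Suc n"]
          by (meson order.strict_trans)
        then show "\<exists>x>b. x < \<gamma>" by blast
      qed (use g in auto)
      then show "\<exists>y\<in>C. c \<le> y" using g(2) by (meson less_imp_le)
    next
      fix g assume g0: "g < \<delta>" and g: "is_limit g \<and> (\<forall>b<g. \<exists>c\<in>C. b < c \<and> c < g)"
      show "g \<in> C" unfolding C_def
      proof (intro CollectI conjI allI impI)
        fix b assume "b < g"
        then obtain c where c: "c \<in> C" "b < c" "c < g" using g by blast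
        then obtain x where "x \<in> S" "b < x" "x < c" unfolding C_def by blast
        then show "\<exists>x\<in>S. b < x \<and> x < g" using c by (meson order.strict_trans)
      qed (use g g0 in auto)
    qed
    moreover have "(S \<inter> below \<delta>) \<inter> C = {}"
    proof (rule ccontr)
      assume "\<not> ?thesis"
      then obtain a where a: "a \<in> S" "a \<in> C" by blast
      then obtain e where e: "e < a" "\<forall>x\<in>S. x < a \<longrightarrow> x \<le> e" using A by blast
      obtain x where "x \<in> S" "e < x" "x < a" using a(2) e(1) unfolding C_def by blast
      then show False using e(2) by force
    qed
    ultimately show ?thesis by blast
  qed
  then show "\<not> stationary_in (S \<inter> below \<delta>) \<delta>" unfolding stationary_in_def by blast
qed

lemma img_bounded:
  fixes k x :: "'a::wellorder" and g :: "'a \<Rightarrow> 'a"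
  assumes card: "is_cardinal k" and reg: "regular k" and u: "uncountable_cf k"
    and x: "x < k" and g: "\<forall>i<k. g i < k"
  shows "\<exists>y. x < y \<and> y < k \<and> (\<forall>i\<le>x. g i < y)"
proof -
  obtain y where y: "x < y" "y < k" using ucf_lim[OF u x] by blast
  have "\<exists>c<k. \<forall>i\<le>x. g i < c"
  proof (rule ccontr)
    assume "\<not> ?thesis"
    then have h: "\<forall>c<k. \<exists>i\<le>x. c \<le> g i" by (meson not_less)
    have "g ` {i. i \<le> x} \<subseteq> below k" using g x by (auto simp: below_def)
    moreover have "\<forall>c<k. \<exists>z\<in>g ` {i. i \<le> x}. c \<le> z" using h by blast
    ultimately have "cofinal_in (g ` {i. i \<le> x}) k" unfolding cofinal_in_def by blast
    then have iso: "(card_of (g ` {i. i \<le> x}), card_of (below k)) \<in> ordIso"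
      using reg unfolding regular_def by blast
    have "(card_of (g ` {i. i \<le> x}), card_of {i. i \<le> x}) \<in> ordLeq" by (rule card_of_image)
    moreover have "(card_of {i. i \<le> x}, card_of (below y)) \<in> ordLeq"
      by (rule card_of_mono1) (use y in \<open>auto simp: below_def\<close>)
    moreover have "(card_of (below y), card_of (below k)) \<in> ordLess"
      using card y unfolding is_cardinal_def by blast
    ultimately have "(card_of (g ` {i. i \<le> x}), card_of (below k)) \<in> ordLess"
      using ordLeq_ordLess_trans ordLeq_transitive by blast
    then show False using iso not_ordLess_ordIso by blast
  qed
  then obtain c where c: "c < k" "\<forall>i\<le>x. g i < c" by blast
  show ?thesis using y c
    by (intro exI[of _ "max c y"]) (auto simp: max_def less_le_trans)
qed

lemma closure_club:
  fixes k b :: "'a::wellorder" and g :: "'a \<Rightarrow> 'a"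
  assumes card: "is_cardinal k" and reg: "regular k" and u: "uncountable_cf k"
    and b: "b < k" and g: "\<forall>i<k. g i < k"
  shows "club {s. s < k \<and> b < s \<and> (\<forall>i<s. g i < s)} k"
  unfolding club_def
proof (intro conjI allI impI)
  show "{s. s < k \<and> b < s \<and> (\<forall>i<s. g i < s)} \<subseteq> below k" by (auto simp: below_def)
next
  fix c assume c: "c < k"
  define F where "F x = (SOME y. x < y \<and> y < k \<and> (\<forall>i\<le>x. g i < y))" for x
  have Fp: "x < F x \<and> F x < k \<and> (\<forall>i\<le>x. g i < F x)" if "x < k" for x
    unfolding F_def by (rule someI_ex) (rule img_bounded[OF card reg u that g])
  have mc: "max c b < k" using b c by (simp add: max_def)
  obtain \<gamma> where gm: "\<gamma> < k" "max c b < \<gamma>" "\<forall>i<\<gamma>. \<exists>n. i < (F^^n) (max c b)"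
      "\<forall>n. (F^^n) (max c b) < \<gamma>"
    using omega_sup[OF u _ mc, of F] Fp by blast
  have sd: "(F^^n) (max c b) < k" for n using gm(1,4) by (meson order.strict_trans)
  have "\<forall>i<\<gamma>. g i < \<gamma>"
  proof (intro allI impI)
    fix i assume "i < \<gamma>"
    then obtain n where n: "i < (F^^n) (max c b)" using gm by blast
    have "g i < (F^^(Suc n)) (max c b)" using Fp[OF sd[of n]] n by simp
    then show "g i < \<gamma>" using gm(4)[rule_format, of "Suc n"] by (meson order.strict_trans)
  qed
  then show "\<exists>y\<in>{s. s < k \<and> b < s \<and> (\<forall>i<s. g i < s)}. c \<le> y"
    using gm(1,2) by (intro bexI[of _ \<gamma>]) auto
next
  fix \<gamma> assume g0: "\<gamma> < k" and gl: "is_limit \<gamma> \<and> (\<forall>b'<\<gamma>. \<exists>c\<in>{s. s < k \<and> b < s \<and> (\<forall>i<s. g i < s)}. b' < c \<and> c < \<gamma>)"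
  obtain y where "y < \<gamma>" using gl unfolding is_limit_def by blast
  then obtain c where "b < c" "c < \<gamma>" using gl by blast
  moreover have "\<forall>i<\<gamma>. g i < \<gamma>"
  proof (intro allI impI)
    fix i assume "i < \<gamma>"
    then obtain c where "i < c" "c < \<gamma>" "\<forall>i<c. g i < c" using gl by blast
    then show "g i < \<gamma>" by (meson order.strict_trans)
  qed
  ultimately show "\<gamma> \<in> {s. s < k \<and> b < s \<and> (\<forall>i<s. g i < s)}" using g0 by auto
qed

lemma inacc_facts:
  fixes k :: "'a::wellorder"
  assumes "strongly_inaccessible k"
  shows "is_cardinal k" "regular k" "uncountable_cf k"
  using assms ucf_of_reg unfolding strongly_inaccessible_def by auto

theorem theorem5p9:
  fixes kappa :: "'a::wellorder"
  assumes "strongly_inaccessible kappa"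
      and "stationary_in (S_pr kappa) kappa"
  shows "\<forall>C. cofinal_family kappa C \<longrightarrow>
           (\<exists>B. unbounded_family kappa B \<and> (card_of B, card_of C) \<in> ordLeq)"
proof (intro allI impI)
  fix C assume cf: "cofinal_family kappa C"
  note kf = inacc_facts[OF assms(1)]
  have Dex: "\<exists>D. club D kappa \<and> (T \<inter> below kappa) \<inter> D = {}" if "T \<in> C" for T
  proof -
    have "nowhere_stationary kappa T" using cf that unfolding cofinal_family_def nst_pr_def by blast
    then have "\<not> stationary_in (T \<inter> below kappa) kappa"
      using kf(3) unfolding nowhere_stationary_def by blast
    then show ?thesis unfolding stationary_in_def by blast
  qed
  define D where "D T = (SOME D. club D kappa \<and> (T \<inter> below kappa) \<inter> D = {})" for T
  have Dp: "club (D T) kappa \<and> (T \<inter> below kappa) \<inter> D T = {}" if "T \<in> C" for T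
    unfolding D_def by (rule someI_ex) (rule Dex[OF that])
  define f where "f T = (\<lambda>i. if i \<in> below kappa then (LEAST x. x \<in> D T \<and> i < x) else undefined)" for T
  have fL: "(LEAST x. x \<in> D T \<and> i < x) \<in> D T \<and> i < (LEAST x. x \<in> D T \<and> i < x)"
    if TC: "T \<in> C" and IK: "i < kappa" for T i
  proof (rule LeastI_ex)
    obtain i' where "i < i'" "i' < kappa" using ucf_lim[OF kf(3) IK] by blast
    then obtain c where "c \<in> D T" "i' \<le> c" using Dp[OF TC] unfolding club_def by blast
    then show "\<exists>x. x \<in> D T \<and> i < x" using \<open>i < i'\<close> by (meson less_le_trans)
  qed
  have fk: "f T \<in> kfuns kappa" if "T \<in> C" for T
  proof -
    have "f T i \<in> below kappa" if "i \<in> below kappa" for i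
      using fL[OF \<open>T \<in> C\<close>, of i] Dp[OF \<open>T \<in> C\<close>] that
      unfolding f_def club_def below_def by auto
    then show ?thesis unfolding kfuns_def f_def by auto
  qed
  have unb: "\<not> (\<exists>g\<in>kfuns kappa. \<forall>h\<in>f ` C. le_star kappa h g)"
  proof
    assume "\<exists>g\<in>kfuns kappa. \<forall>h\<in>f ` C. le_star kappa h g"
    then obtain g where gk: "g \<in> kfuns kappa" and H: "\<forall>T\<in>C. le_star kappa (f T) g" by blast
    have gl: "\<forall>i<kappa. g i < kappa" using gk unfolding kfuns_def below_def by auto
    define A where "A = {s \<in> S_pr kappa. \<forall>i<s. g i < s}"
    define S where "S = {a \<in> A. \<exists>e<a. \<forall>x\<in>A. x < a \<longrightarrow> x \<le> e}"
    have "S \<in> nst_pr kappa" unfolding nst_pr_def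
    proof (intro CollectI conjI)
      show "S \<subseteq> S_pr kappa" unfolding S_def A_def by auto
      show "nowhere_stationary kappa S" by (rule nolimit_ns) (auto simp: S_def)
    qed
    then obtain T where T: "T \<in> C" "subseteq_star kappa S T" using cf unfolding cofinal_family_def by blast
    then obtain b0 where b0: "b0 < kappa" "S - T \<subseteq> below b0" unfolding subseteq_star_def by blast
    obtain b1 where b1: "b1 < kappa" "\<forall>i. b1 \<le> i \<and> i < kappa \<longrightarrow> f T i \<le> g i"
      using H T(1) unfolding le_star_def by blast
    define b where "b = max b0 b1"
    have bk: "b < kappa" using b0 b1 by (simp add: b_def)
    have "S_pr kappa \<inter> {s. s < kappa \<and> b < s \<and> (\<forall>i<s. g i < s)} \<noteq> {}"
      using assms(2) closure_club[OF kf bk gl] unfolding stationary_in_def by blast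
    then have ex: "\<exists>a. a \<in> A \<and> b < a" unfolding A_def by blast
    define a where "a = (LEAST a. a \<in> A \<and> b < a)"
    have aA: "a \<in> A \<and> b < a" unfolding a_def by (rule LeastI_ex[OF ex])
    have amin: "\<forall>x\<in>A. x < a \<longrightarrow> x \<le> b"
      using not_less_Least unfolding a_def by (metis not_le)
    have aS: "a \<in> S" using aA amin unfolding S_def by blast
    have "a \<notin> below b0" using aA unfolding b_def below_def by auto
    then have aT: "a \<in> T" using aS b0(2) by blast
    have aSpr: "a \<in> S_pr kappa" using aA unfolding A_def by blast
    then have ak: "a < kappa" and ainc: "strongly_inaccessible a"
      unfolding S_pr_def S_inc_def by auto
    have aD: "a \<notin> D T" using aT ak Dp[OF T(1)] unfolding below_def by blast
    have alim: "is_limit a" unfolding is_limit_def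
      using aA ucf_lim[OF inacc_facts(3)[OF ainc]] by blast
    have "\<not> (\<forall>y<a. \<exists>c\<in>D T. y < c \<and> c < a)"
      using aD alim ak Dp[OF T(1)] unfolding club_def by blast
    then obtain y where y: "y < a" "\<forall>c\<in>D T. \<not> (y < c \<and> c < a)" by blast
    define i where "i = max y b"
    have ia: "i < a" using y aA by (simp add: i_def)
    have ik: "i < kappa" using ia ak by simp
    have v: "(LEAST x. x \<in> D T \<and> i < x) \<in> D T \<and> i < (LEAST x. x \<in> D T \<and> i < x)"
      using fL[OF T(1) ik] .
    have "a \<le> f T i"
      using v y(2) ik unfolding f_def i_def below_def by (auto simp: not_less)
    moreover have "b1 \<le> i" unfolding i_def b_def by (meson max.cobounded2 max.coboundedI2)
    then have "f T i \<le> g i" using b1(2) ik by blast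
    moreover have "g i < a" using aA ia unfolding A_def by blast
    ultimately show False by simp
  qed
  show "\<exists>B. unbounded_family kappa B \<and> (card_of B, card_of C) \<in> ordLeq"
    using unb fk card_of_image[of f C] unfolding unbounded_family_def by blast
qed

end
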